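(* Let $\gamma\in\mathbb C$ and $H_1(\gamma)=I-\gamma D$. Then $$(n!)^{1/n}|\gamma|\le K_h\bigl(H_1(\gamma)^{-1}\bigr)\le n|\gamma|.$$
   Context: Let $n\ge1$ and $\mathcal P_n$ the complex vector space of polynomials in one complex variable of degree at most $n$; $D$ is differentiation and $I$ the identity on $\mathcal P_n$ ($I-\gamma D$ is invertible). For nonzero $f$, $Z(f)$ is the multiset of roots of $f$ (with multiplicity; empty for nonzero constants); $Z(0)=\mathbb C$. For finite nonempty $A,B\subset\mathbb C$, $d_h(A,B)=\max_{y\in B}\min_{x\in A}|x-y|$, with conventions $d_h(\emptyset,\emptyset)=0$, $d_h(A,\emptyset)=d_h(\emptyset,A)=+\infty$ for $A\ne\emptyset$, and $d_h(A,B)=0$ if one of $A,B$ equals $\mathbb C$ and the other is nonempty. $K_h(T)=\sup_{f\in\mathcal P_n}d_h(Z(f),Z(Tf))$. *)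

theory Defs
  imports "HOL-Computational_Algebra.Polynomial" "HOL-Library.Extended_Real"
begin

definition Pn :: "nat \<Rightarrow> complex poly set" where
  "Pn n = {p. degree p \<le> n}"

definition H1 :: "complex \<Rightarrow> complex poly \<Rightarrow> complex poly" where
  "H1 \<gamma> f = f - smult \<gamma> (pderiv f)"

definition H1inv :: "nat \<Rightarrow> complex \<Rightarrow> complex poly \<Rightarrow> complex poly" where
  "H1inv n \<gamma> = the_inv_into (Pn n) (H1 \<gamma>)"

text \<open>Zero set Z(f); the whole plane for f = 0 (multiplicities irrelevant for d_h).\<close>
definition Z :: "complex poly \<Rightarrow> complex set" where
  "Z f = {x. poly f x = 0}"

definition dh :: "complex set \<Rightarrow> complex set \<Rightarrow> ereal" where
  "dh A B = (if A = {} \<and> B = {} then 0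
             else if A = {} \<or> B = {} then \<infinity>
             else if A = UNIV \<or> B = UNIV then 0
             else (SUP y\<in>B. INF x\<in>A. ereal (cmod (x - y))))"

definition Kh :: "nat \<Rightarrow> (complex poly \<Rightarrow> complex poly) \<Rightarrow> ereal" where
  "Kh n T = (SUP f\<in>Pn n. dh (Z f) (Z (T f)))"

end

theory Submission
  imports Defs "HOL-Computational_Algebra.Fundamental_Theorem_Algebra"
begin

lemma EK_identity:
  fixes b :: "nat \<Rightarrow> real" and y :: complex
  shows "(1 - y) * (\<Sum>i\<le>k. of_real (b i) * y^i) =
     of_real (b 0) - of_real (b k) * y^(Suc k) + (\<Sum>i\<in>{1..k}. of_real (b i - b (i-1)) * y^i)"
proof (induction k)
  case 0 then show ?case by (simp add: algebra_simps)
next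
  case (Suc k)
  have "(1 - y) * (\<Sum>i\<le>Suc k. of_real (b i) * y^i) =
     (1 - y) * (\<Sum>i\<le>k. of_real (b i) * y^i) + (1-y) * of_real (b (Suc k)) * y^(Suc k)"
    by (simp add: algebra_simps)
  also have "\<dots> = of_real (b 0) - of_real (b (Suc k)) * y^(Suc (Suc k)) + (\<Sum>i\<in>{1..Suc k}. of_real (b i - b (i-1)) * y^i)"
    using Suc by (simp add: algebra_simps)
  finally show ?case .
qed

lemma chain_mono:
  fixes b :: "nat \<Rightarrow> real"
  assumes "\<And>i. i < k \<Longrightarrow> b i \<le> b (Suc i)" "i \<le> k"
  shows "b 0 \<le> b i"
  using assms(2)
proof (induction i)
  case (Suc i)
  then have "b 0 \<le> b i" by simp
  also have "b i \<le> b (Suc i)" using assms(1) Suc.prems by simp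
  finally show ?case .
qed simp

lemma EK_bound:
  fixes b :: "nat \<Rightarrow> real" and r :: real
  assumes "r \<ge> 1" "\<And>i. i < k \<Longrightarrow> b i \<le> b (Suc i)" "b 0 \<ge> 0"
  shows "b 0 + (\<Sum>i\<in>{1..k}. (b i - b (i-1)) * r^i) \<le> b k * r^k"
  using assms(2)
proof (induction k)
  case 0 then show ?case by simp
next
  case (Suc k)
  have bk: "b k \<ge> 0"
  proof -
    have "b 0 \<le> b k" by (rule chain_mono[of "Suc k"]) (use Suc.prems in auto)
    then show ?thesis using assms(3) by force
  qed
  have "b 0 + (\<Sum>i\<in>{1..Suc k}. (b i - b (i-1)) * r^i) = b 0 + (\<Sum>i\<in>{1..k}. (b i - b (i-1)) * r^i) + (b (Suc k) - b k) * r^Suc k"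
    by simp
  also have "\<dots> \<le> b k * r^k + (b (Suc k) - b k) * r^Suc k"
    using Suc by simp
  also have "\<dots> \<le> b k * r^Suc k + (b (Suc k) - b k) * r^Suc k"
  proof -
    have "r^k \<le> r^Suc k" using assms(1) by (simp add: power_increasing)
    then show ?thesis using bk by (simp add: mult_left_mono)
  qed
  also have "\<dots> = b (Suc k) * r^Suc k" by (simp add: algebra_simps)
  finally show ?case .
qed

lemma EK:
  fixes b :: "nat \<Rightarrow> real" and y :: complex
  assumes "b 0 > 0" "\<And>i. i < k \<Longrightarrow> b i \<le> b (Suc i)"
    and "(\<Sum>i\<le>k. of_real (b i) * y^i) = 0"
  shows "norm y \<le> 1"
proof (rule ccontr)
  assume "\<not> norm y \<le> 1"
  then have r: "norm y > 1" by simp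
  have "b 0 \<le> b k" by (rule chain_mono[of k]) (use assms(2) in auto)
  then have bk: "b k > 0" using assms(1) by force
  have "0 = of_real (b 0) - of_real (b k) * y^(Suc k) + (\<Sum>i\<in>{1..k}. of_real (b i - b (i-1)) * y^i)"
    using EK_identity[of y b k] assms(3) by simp
  then have eq: "of_real (b k) * y^(Suc k) = of_real (b 0) + (\<Sum>i\<in>{1..k}. of_real (b i - b (i-1)) * y^i)"
    by (simp add: algebra_simps)
  have "b k * norm y ^ Suc k = norm (of_real (b k) * y^(Suc k))"
    using bk by (simp add: norm_mult norm_power)
  also have "\<dots> \<le> norm (of_real (b 0) :: complex) + norm (\<Sum>i\<in>{1..k}. of_real (b i - b (i-1)) * y^i)"
    unfolding eq by (rule norm_triangle_ineq)
  also have "\<dots> \<le> b 0 + (\<Sum>i\<in>{1..k}. (b i - b (i-1)) * norm y^i)"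
  proof -
    have "norm (\<Sum>i\<in>{1..k}. of_real (b i - b (i-1)) * y^i) \<le> (\<Sum>i\<in>{1..k}. norm (of_real (b i - b (i-1)) * y^i))"
      by (rule norm_sum)
    also have "\<dots> = (\<Sum>i\<in>{1..k}. (b i - b (i-1)) * norm y^i)"
    proof (rule sum.cong)
      fix i assume "i \<in> {1..k}"
      then have "b (i-1) \<le> b i" using assms(2)[of "i-1"] by auto
      then show "norm (of_real (b i - b (i-1)) * y^i) = (b i - b (i-1)) * norm y^i"
        by (simp only: norm_mult norm_power norm_of_real)
    qed simp
    finally show ?thesis using assms(1) by simp
  qed
  also have "\<dots> \<le> b k * norm y ^ k"
    by (rule EK_bound) (use r assms in auto)
  also have "\<dots> < b k * norm y ^ Suc k"
    using bk r by (intro mult_strict_left_mono power_strict_increasing) auto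
  finally show False by simp
qed

definition pstep :: "nat \<Rightarrow> complex \<Rightarrow> complex poly \<Rightarrow> complex poly" where
  "pstep M \<zeta> p = smult (of_nat M) p + [:\<zeta>, -1:] * pderiv p"

fun polar :: "(nat \<Rightarrow> complex) \<Rightarrow> nat \<Rightarrow> complex poly \<Rightarrow> complex poly" where
  "polar z 0 p = p"
| "polar z (Suc m) p = polar z m (pstep (Suc m) (z m) p)"

lemma coeff_lin_mult:
  fixes r :: "complex poly"
  shows "coeff ([:\<zeta>, c:] * r) j = \<zeta> * coeff r j + (if j = 0 then 0 else c * coeff r (j - 1))"
  by (cases j) (simp_all add: coeff_pCons)

lemma coeff_pstep:
  "coeff (pstep M \<zeta> p) j = (of_nat M - of_nat j) * coeff p j + \<zeta> * of_nat (Suc j) * coeff p (Suc j)"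
proof (cases j)
  case 0 then show ?thesis by (simp add: pstep_def coeff_lin_mult coeff_pderiv)
next
  case (Suc i) then show ?thesis
    by (simp add: pstep_def coeff_lin_mult coeff_pderiv algebra_simps)
qed

lemma degree_pstep:
  assumes "degree p \<le> Suc m"
  shows "degree (pstep (Suc m) \<zeta> p) \<le> m"
proof (rule degree_le, intro allI impI)
  fix i assume "m < i"
  then have "coeff p (Suc i) = 0" using assms by (intro coeff_eq_0) auto
  moreover have "i = Suc m \<or> coeff p i = 0" using assms \<open>m < i\<close> by (auto intro: coeff_eq_0)
  ultimately show "coeff (pstep (Suc m) \<zeta> p) i = 0"
    by (auto simp: coeff_pstep)
qed

lemma coeff_linfac:
  fixes W :: "complex poly"
  shows "coeff ([:-a, 1:] * W) i = (if i = 0 then 0 else coeff W (i - 1)) - a * coeff W i"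
  by (cases i) (simp_all add: coeff_pCons)

lemma polar_identity:
  assumes "degree p \<le> m"
  shows "polar z m p = [: \<Sum>j\<le>m. coeff p j * fact j * fact (m - j) * (-1)^j
                              * coeff (\<Prod>i<m. [:-z i, 1:]) (m - j) :]"
  using assms
proof (induction m arbitrary: p)
  case 0
  then show ?case by (auto elim!: degree_eq_zeroE)
next
  case (Suc m)
  define W where "W = (\<Prod>i<m. [:-z i, 1:])"
  define \<zeta> where "\<zeta> = z m"
  define q where "q = pstep (Suc m) \<zeta> p"
  define P where "P = coeff p"
  define c where "c j = fact j * fact (m - j) * (-1)^j * coeff W (m - j)" for j
  have W': "(\<Prod>i<Suc m. [:-z i, 1:]) = [:-\<zeta>, 1:] * W"
    by (simp add: W_def \<zeta>_def mult.commute)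
  have degW: "degree W \<le> m"
  proof -
    have "degree W \<le> (\<Sum>i<m. degree [:-z i, 1:])" unfolding W_def using degree_prod_sum_le[of "{..<m}" "\<lambda>i. [:-z i, 1:]"] by (simp add: o_def)
    also have "\<dots> = m" by simp
    finally show ?thesis .
  qed
  have Wm: "coeff W (Suc m) = 0" using degW by (intro coeff_eq_0) auto
  have dq: "degree q \<le> m" unfolding q_def by (rule degree_pstep) (use Suc.prems in auto)
  have "polar z (Suc m) p = polar z m q" by (simp add: q_def \<zeta>_def)
  also have "\<dots> = [: \<Sum>j\<le>m. coeff q j * c j :]"
    by (subst Suc.IH[OF dq]) (simp add: c_def W_def mult.assoc)
  also have "(\<Sum>j\<le>m. coeff q j * c j) =
      (\<Sum>j\<le>m. (of_nat (Suc m) - of_nat j) * P j * c j) + \<zeta> * (\<Sum>j\<le>m. of_nat (Suc j) * P (Suc j) * c j)"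
  proof -
    have "(\<Sum>j\<le>m. coeff q j * c j) = (\<Sum>j\<le>m. (of_nat (Suc m) - of_nat j) * P j * c j + \<zeta> * (of_nat (Suc j) * P (Suc j) * c j))"
      by (rule sum.cong) (simp_all add: q_def coeff_pstep P_def algebra_simps)
    also have "\<dots> = (\<Sum>j\<le>m. (of_nat (Suc m) - of_nat j) * P j * c j) + \<zeta> * (\<Sum>j\<le>m. of_nat (Suc j) * P (Suc j) * c j)"
      by (simp add: sum.distrib sum_distrib_left)
    finally show ?thesis .
  qed
  also have "(\<Sum>j\<le>m. (of_nat (Suc m) - of_nat j) * P j * c j) =
     (\<Sum>j\<le>Suc m. P j * fact j * fact (Suc m - j) * (-1)^j * (if Suc m - j = 0 then 0 else coeff W (Suc m - j - 1)))"
  proof -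
    have "(\<Sum>j\<le>Suc m. P j * fact j * fact (Suc m - j) * (-1)^j * (if Suc m - j = 0 then 0 else coeff W (Suc m - j - 1)))
       = (\<Sum>j\<le>m. P j * fact j * fact (Suc m - j) * (-1)^j * coeff W (m - j))"
      by (subst sum.atMost_Suc) (auto intro!: sum.cong simp: Suc_diff_le)
    also have "\<dots> = (\<Sum>j\<le>m. (of_nat (Suc m) - of_nat j) * P j * c j)"
    proof (rule sum.cong)
      fix j assume "j \<in> {..m}"
      then have j: "j \<le> m" by simp
      have "fact (Suc m - j) = (of_nat (Suc m) - of_nat j) * (fact (m - j) :: complex)"
        using j by (simp add: Suc_diff_le of_nat_diff)
      then show "P j * fact j * fact (Suc m - j) * (-1)^j * coeff W (m - j) = (of_nat (Suc m) - of_nat j) * P j * c j"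
        by (simp add: c_def)
    qed simp
    finally show ?thesis by simp
  qed
  also have "(\<Sum>j\<le>m. of_nat (Suc j) * P (Suc j) * c j) =
      - (\<Sum>j\<le>Suc m. P j * fact j * fact (Suc m - j) * (-1)^j * coeff W (Suc m - j))"
  proof -
    have "(\<Sum>j\<le>Suc m. P j * fact j * fact (Suc m - j) * (-1)^j * coeff W (Suc m - j))
       = (\<Sum>i\<le>m. P (Suc i) * fact (Suc i) * fact (m - i) * (-1)^(Suc i) * coeff W (m - i))"
      by (subst sum.atMost_Suc_shift) (simp add: Wm)
    also have "\<dots> = - (\<Sum>j\<le>m. of_nat (Suc j) * P (Suc j) * c j)"
      by (simp add: c_def sum_negf[symmetric] algebra_simps)
    finally show ?thesis by simp
  qed
  also have "(\<Sum>j\<le>Suc m. P j * fact j * fact (Suc m - j) * (-1)^j * (if Suc m - j = 0 then 0 else coeff W (Suc m - j - 1)))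
      + \<zeta> * - (\<Sum>j\<le>Suc m. P j * fact j * fact (Suc m - j) * (-1)^j * coeff W (Suc m - j))
      = (\<Sum>j\<le>Suc m. coeff p j * fact j * fact (Suc m - j) * (-1)^j * coeff (\<Prod>i<Suc m. [:-z i, 1:]) (Suc m - j))"
  proof -
    have "(\<Sum>j\<le>Suc m. coeff p j * fact j * fact (Suc m - j) * (-1)^j * coeff (\<Prod>i<Suc m. [:-z i, 1:]) (Suc m - j))
       = (\<Sum>j\<le>Suc m. P j * fact j * fact (Suc m - j) * (-1)^j * (if Suc m - j = 0 then 0 else coeff W (Suc m - j - 1))
            - \<zeta> * (P j * fact j * fact (Suc m - j) * (-1)^j * coeff W (Suc m - j)))"
    proof (rule sum.cong[OF refl])
      fix j
      show "coeff p j * fact j * fact (Suc m - j) * (-1)^j * coeff (\<Prod>i<Suc m. [:-z i, 1:]) (Suc m - j)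
        = P j * fact j * fact (Suc m - j) * (-1)^j * (if Suc m - j = 0 then 0 else coeff W (Suc m - j - 1))
            - \<zeta> * (P j * fact j * fact (Suc m - j) * (-1)^j * coeff W (Suc m - j))"
        unfolding W' coeff_linfac P_def by (simp only: right_diff_distrib mult_ac)
    qed
    also have "\<dots> = (\<Sum>j\<le>Suc m. P j * fact j * fact (Suc m - j) * (-1)^j * (if Suc m - j = 0 then 0 else coeff W (Suc m - j - 1)))
      + \<zeta> * - (\<Sum>j\<le>Suc m. P j * fact j * fact (Suc m - j) * (-1)^j * coeff W (Suc m - j))"
      by (simp only: diff_conv_add_uminus sum.distrib sum_negf sum_distrib_left mult_minus_right)
    finally show ?thesis by simp
  qed
  finally show ?case .
qed

lemma cmod_diff_sq:
  fixes x y :: complex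
  shows "cmod (x - y)^2 = cmod x^2 - 2 * Re (x * cnj y) + cmod y^2"
  unfolding cmod_power2 by (simp add: power2_eq_square algebra_simps)

lemma key_ineq:
  fixes v :: "nat \<Rightarrow> complex" and d M :: nat and w V :: complex and a :: real
  assumes "d \<le> M" "1 \<le> M" "(\<Sum>i<d. v i) = of_nat M * V"
    and pos: "\<And>i. i < d \<Longrightarrow> a * cmod (v i)^2 - 2 * Re (w * v i) + 1 > 0"
    and "a \<le> 0"
  shows "a * cmod V^2 - 2 * Re (w * V) + 1 > 0"
proof -
  define S2 where "S2 = (\<Sum>i<d. cmod (v i)^2)"
  have "0 \<le> (\<Sum>i<d. cmod (v i - V)^2)" by (simp add: sum_nonneg)
  also have "\<dots> = (\<Sum>i<d. cmod (v i)^2 - 2 * Re (v i * cnj V) + cmod V^2)"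
    by (simp add: cmod_diff_sq)
  also have "\<dots> = S2 - 2 * Re ((\<Sum>i<d. v i) * cnj V) + d * cmod V^2"
    by (simp add: S2_def sum_subtractf sum.distrib sum_distrib_left sum_distrib_right Re_sum)
  also have "(\<Sum>i<d. v i) * cnj V = of_real (M * cmod V^2)"
    using assms(3) by (simp add: mult.assoc complex_mult_cnj cmod_power2)
  finally have CS: "M * cmod V^2 \<le> S2"
  proof -
    assume h: "0 \<le> S2 - 2 * Re (complex_of_real (real M * (cmod V)\<^sup>2)) + real d * (cmod V)\<^sup>2"
    have "real d * cmod V^2 \<le> real M * cmod V^2" using assms(1) by (intro mult_right_mono) auto
    then show ?thesis using h by simp
  qed
  have sumQ: "(\<Sum>i<d. a * cmod (v i)^2 - 2 * Re (w * v i) + 1) = a * S2 - 2 * (M * Re (w * V)) + d"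
  proof -
    have "(\<Sum>i<d. a * cmod (v i)^2 - 2 * Re (w * v i) + 1) = a * S2 - 2 * Re (w * (\<Sum>i<d. v i)) + d"
      by (simp add: S2_def sum_subtractf sum.distrib sum_distrib_left Re_sum)
    also have "Re (w * (\<Sum>i<d. v i)) = M * Re (w * V)" using assms(3) by (simp add: algebra_simps)
    finally show ?thesis .
  qed
  have "(\<Sum>i<d. a * cmod (v i)^2 - 2 * Re (w * v i) + 1) + (M - d) > 0"
  proof (cases "d = 0")
    case True then show ?thesis using assms(2) by simp
  next
    case False
    then have "(\<Sum>i<d. a * cmod (v i)^2 - 2 * Re (w * v i) + 1) > 0"
      using pos by (intro sum_pos) auto
    then show ?thesis using assms(1) by simp
  qed
  then have "a * S2 - 2 * (M * Re (w * V)) + M > 0" using sumQ assms(1) by (simp add: of_nat_diff)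
  moreover have "a * S2 \<le> a * (M * cmod V^2)" using CS assms(5) by (rule mult_left_mono_neg)
  ultimately have "M * (a * cmod V^2 - 2 * Re (w * V) + 1) > 0" by (simp add: algebra_simps)
  then show ?thesis using assms(2) by (simp add: zero_less_mult_iff)
qed

lemma Qform:
  fixes w u :: complex and R :: real
  assumes "w \<noteq> u"
  shows "(cmod w^2 - R^2) * cmod (1 / (w - u))^2 - 2 * Re (w * (1 / (w - u))) + 1
        = (cmod u^2 - R^2) * cmod (1 / (w - u))^2"
proof -
  define v where "v = 1 / (w - u)"
  have "w * v - 1 = u * v" using assms by (simp add: v_def field_simps)
  then have "cmod (w * v - 1)^2 = cmod u^2 * cmod v^2" by (simp add: norm_mult power_mult_distrib)
  moreover have "cmod (w * v - 1)^2 = cmod w^2 * cmod v^2 - 2 * Re (w * v) + 1"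
    by (simp add: cmod_diff_sq norm_mult power_mult_distrib)
  ultimately show ?thesis unfolding v_def[symmetric] by (simp add: algebra_simps)
qed

lemma logderiv:
  fixes r :: "nat \<Rightarrow> complex"
  assumes "\<And>i. i < d \<Longrightarrow> w \<noteq> r i"
  shows "poly (pderiv (\<Prod>i<d. [:-r i, 1:])) w = poly (\<Prod>i<d. [:-r i, 1:]) w * (\<Sum>i<d. 1 / (w - r i))"
  using assms
proof (induction d)
  case 0 then show ?case by simp
next
  case (Suc d)
  have ne: "w - r d \<noteq> 0" using Suc.prems by auto
  have IH: "poly (pderiv (\<Prod>i<d. [:-r i, 1:])) w = poly (\<Prod>i<d. [:-r i, 1:]) w * (\<Sum>i<d. 1 / (w - r i))"
    using Suc by auto
  define P where "P = (\<Prod>i<d. [:-r i, 1:])"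
  have d1: "pderiv [:-r d, 1:] = 1" by (simp add: pderiv_pCons)
  have e: "(\<Prod>i<Suc d. [:-r i, 1:]) = P * [:-r d, 1:]" by (simp add: P_def)
  have "poly (pderiv (P * [:-r d, 1:])) w = poly P w + (w - r d) * poly (pderiv P) w"
    by (simp only: pderiv_mult d1 poly_add poly_mult) simp
  also have "\<dots> = poly P w * (w - r d) * ((\<Sum>i<d. 1 / (w - r i)) + 1 / (w - r d))"
    using ne by (simp add: IH[folded P_def] field_simps)
  finally have X: "poly (pderiv (P * [:-r d, 1:])) w = poly P w * (w - r d) * ((\<Sum>i<d. 1 / (w - r i)) + 1 / (w - r d))" .
  have Y: "poly (P * [:-r d, 1:]) w = poly P w * (w - r d)" by (simp add: algebra_simps)
  show ?case unfolding e X Y by simp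
qed

lemma laguerre:
  fixes p :: "complex poly" and \<zeta> w :: complex and R :: real
  assumes "p \<noteq> 0" "degree p \<le> Suc m" and roots: "\<And>u. poly p u = 0 \<Longrightarrow> R < cmod u"
    and "cmod \<zeta> \<le> R" "cmod w \<le> R"
  shows "poly (pstep (Suc m) \<zeta> p) w \<noteq> 0"
proof
  assume q0: "poly (pstep (Suc m) \<zeta> p) w = 0"
  obtain r where r: "smult (lead_coeff p) (\<Prod>i<degree p. [:-r i, 1:]) = p"
    using complex_poly_decompose' by blast
  define d where "d = degree p"
  define c where "c = lead_coeff p"
  define P where "P = (\<Prod>i<d. [:-r i, 1:])"
  have c0: "c \<noteq> 0" using assms(1) by (simp add: c_def)
  have pP: "p = smult c P" using r by (simp add: c_def P_def d_def)
  have R0: "R \<ge> 0" using assms(4) norm_ge_zero order_trans by blast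
  have rR: "R < cmod (r i)" if "i < d" for i
  proof (rule roots)
    have "poly P (r i) = 0" unfolding P_def poly_prod using that by (intro prod_zero) auto
    then show "poly p (r i) = 0" by (simp add: pP)
  qed
  have wr: "w \<noteq> r i" if "i < d" for i using rR[OF that] assms(5) by auto
  have pw: "poly p w \<noteq> 0" using roots assms(5) by force
  define S where "S = (\<Sum>i<d. 1 / (w - r i))"
  have dp: "poly (pderiv p) w = poly p w * S"
    unfolding pP by (simp add: pderiv_smult S_def P_def logderiv wr)
  have "poly p w * (of_nat (Suc m) + (\<zeta> - w) * S) = 0"
    using q0 by (simp add: pstep_def dp algebra_simps)
  then have eq: "of_nat (Suc m) + (\<zeta> - w) * S = 0" using pw by simp
  have wz: "w \<noteq> \<zeta>"
  proof
    assume "w = \<zeta>"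
    then have "(of_nat (Suc m) :: complex) = 0" using eq by simp
    then show False by (metis of_nat_eq_0_iff nat.distinct(1))
  qed
  define V where "V = 1 / (w - \<zeta>)"
  have SV: "(\<Sum>i<d. 1 / (w - r i)) = of_nat (Suc m) * V"
    using eq wz by (simp add: S_def[symmetric] V_def field_simps)
  define a where "a = cmod w^2 - R^2"
  have a0: "a \<le> 0" using assms(5) R0 by (simp add: a_def power_mono)
  have "a * cmod V^2 - 2 * Re (w * V) + 1 > 0"
  proof (rule key_ineq[OF _ _ SV])
    show "d \<le> Suc m" using assms(2) by (simp add: d_def)
    show "a \<le> 0" by (rule a0)
    fix i assume i: "i < d"
    have "R^2 < cmod (r i)^2" using rR[OF i] R0 by (simp add: power_strict_mono)
    moreover have "cmod (1 / (w - r i)) > 0" using wr[OF i] by simp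
    ultimately have "(cmod (r i)^2 - R^2) * cmod (1 / (w - r i))^2 > 0" by simp
    then show "a * cmod (1 / (w - r i))^2 - 2 * Re (w * (1 / (w - r i))) + 1 > 0"
      using Qform[OF wr[OF i], of R] by (simp add: a_def)
  qed simp
  moreover have "a * cmod V^2 - 2 * Re (w * V) + 1 = (cmod \<zeta>^2 - R^2) * cmod V^2"
    using Qform[OF wz, of R] by (simp add: a_def V_def)
  moreover have "(cmod \<zeta>^2 - R^2) * cmod V^2 \<le> 0"
    using assms(4) R0 by (intro mult_nonpos_nonneg) (auto simp: power_mono)
  ultimately show False by simp
qed

lemma polar_nonzero:
  assumes "p \<noteq> 0" "degree p \<le> m" "\<And>u. poly p u = 0 \<Longrightarrow> R < cmod u"
    "\<And>i. i < m \<Longrightarrow> cmod (z i) \<le> R"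
  shows "polar z m p \<noteq> 0"
  using assms
proof (induction m arbitrary: p)
  case 0 then show ?case by simp
next
  case (Suc m)
  define q where "q = pstep (Suc m) (z m) p"
  have zm: "cmod (z m) \<le> R" using Suc.prems(4) by simp
  have "poly q (z m) \<noteq> 0" unfolding q_def
    by (rule laguerre[OF Suc.prems(1,2)]) (use Suc.prems(3) zm in auto)
  then have q0: "q \<noteq> 0" by auto
  have qr: "R < cmod u" if "poly q u = 0" for u
  proof (rule ccontr)
    assume "\<not> R < cmod u"
    then have "poly q u \<noteq> 0" unfolding q_def
      by (intro laguerre[OF Suc.prems(1,2)]) (use Suc.prems(3) zm in auto)
    with that show False by simp
  qed
  have dq: "degree q \<le> m" unfolding q_def by (rule degree_pstep) (use Suc.prems(2) in simp)
  have "polar z m q \<noteq> 0"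
    by (rule Suc.IH[OF q0 dq qr]) (use Suc.prems(4) in auto)
  then show ?case by (simp add: q_def)
qed

definition E0 :: "nat \<Rightarrow> complex poly" where
  "E0 k = (\<Sum>i\<le>k. monom ((-1)^i / fact i) i)"

lemma coeff_E0: "coeff (E0 k) i = (if i \<le> k then (-1)^i / fact i else 0)"
  by (simp add: E0_def coeff_sum coeff_monom)

lemma degree_E0: "degree (E0 k) = k"
proof (rule antisym)
  show "degree (E0 k) \<le> k" by (rule degree_le) (simp add: coeff_E0)
  show "k \<le> degree (E0 k)" by (rule le_degree) (simp add: coeff_E0)
qed

lemma poly_E0: "poly (E0 k) x = (\<Sum>i\<le>k. (-1)^i / fact i * x^i)"
  by (simp add: E0_def poly_sum poly_monom)

lemma E0_root_bound:
  assumes "poly (E0 k) x = 0" "k \<ge> 1"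
  shows "cmod x \<le> real k"
proof -
  define b where "b i = real k ^ i / fact i" for i
  define y where "y = - x / of_nat k"
  have k0: "(of_nat k :: complex) \<noteq> 0" using assms(2) by simp
  have "(\<Sum>i\<le>k. of_real (b i) * y^i) = (\<Sum>i\<le>k. (-1)^i / fact i * x^i)"
  proof (rule sum.cong[OF refl])
    fix i
    have "of_real (b i) * y^i = (of_nat k)^i / fact i * ((-1)^i * x^i / (of_nat k)^i)"
    proof -
      have y: "y = ((-1) * x) / of_nat k" by (simp add: y_def)
      have "y^i = (-1)^i * x^i / (of_nat k)^i" unfolding y power_divide power_mult_distrib ..
      moreover have "(of_real (b i) :: complex) = (of_nat k)^i / fact i" by (simp add: b_def)
      ultimately show ?thesis by simp
    qed
    also have "\<dots> = (-1)^i / fact i * x^i" using k0 by (simp add: field_simps)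
    finally show "of_real (b i) * y^i = (-1)^i / fact i * x^i" .
  qed
  also have "\<dots> = 0" using assms(1) by (simp add: poly_E0)
  finally have "norm y \<le> 1"
  proof (intro EK[of b k y])
    show "0 < b 0" by (simp add: b_def)
    fix i assume i: "i < k"
    have "b (Suc i) = b i * (real k / real (Suc i))"
      by (simp add: b_def field_simps)
    moreover have "real k / real (Suc i) \<ge> 1" using i by simp
    moreover have "b i \<ge> 0" by (simp add: b_def)
    ultimately show "b i \<le> b (Suc i)"
      using mult_left_mono[of 1 "real k / real (Suc i)" "b i"] by simp
  qed
  then show ?thesis using assms(2) by (simp add: y_def norm_divide)
qed

lemma core:
  fixes p :: "complex poly" and k :: nat
  assumes "degree p = k" "1 \<le> k" "\<And>t. poly p t = 0 \<Longrightarrow> real k < cmod t"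
  shows "(\<Sum>j\<le>k. fact j * coeff p j) \<noteq> 0"
proof
  assume S0: "(\<Sum>j\<le>k. fact j * coeff p j) = 0"
  define lc where "lc = ((-1)^k / fact k :: complex)"
  have lc: "coeff (E0 k) k = lc" by (simp add: coeff_E0 lc_def)
  have lc0: "lc \<noteq> 0" by (simp add: lc_def)
  obtain z where z: "smult (lead_coeff (E0 k)) (\<Prod>i<degree (E0 k). [:-z i, 1:]) = E0 k"
    using complex_poly_decompose' by blast
  define W where "W = (\<Prod>i<k. [:-z i, 1:])"
  have WE: "smult lc W = E0 k" using z by (simp add: lc degree_E0 W_def)
  have zb: "cmod (z i) \<le> real k" if "i < k" for i
  proof (rule E0_root_bound[OF _ assms(2)])
    have "poly W (z i) = 0" unfolding W_def poly_prod using that by (intro prod_zero) auto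
    then show "poly (E0 k) (z i) = 0" by (simp flip: WE)
  qed
  have p0: "p \<noteq> 0" using assms(1,2) by auto
  have "polar z k p \<noteq> 0"
    by (rule polar_nonzero[OF p0 _ assms(3) zb]) (use assms(1) in auto)
  moreover have "polar z k p = [: \<Sum>j\<le>k. coeff p j * fact j * fact (k - j) * (-1)^j * coeff W (k - j) :]"
    unfolding W_def by (rule polar_identity) (use assms(1) in simp)
  moreover have "(\<Sum>j\<le>k. coeff p j * fact j * fact (k - j) * (-1)^j * coeff W (k - j)) = fact k * (\<Sum>j\<le>k. fact j * coeff p j)"
    unfolding sum_distrib_left
  proof (rule sum.cong[OF refl])
    fix j assume "j \<in> {..k}"
    then have j: "j \<le> k" by simp
    have cW: "coeff W (k - j) = coeff (E0 k) (k - j) / lc"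
      using lc0 by (simp flip: WE)
    have sgn: "(-1::complex)^j * (-1)^(k - j) = (-1)^k"
      using j by (metis le_add_diff_inverse power_add)
    have sgn2: "(-1::complex)^k * (-1)^k = 1"
      by (metis mult_minus1 minus_minus power_mult_distrib power_one)
    have "coeff p j * fact j * fact (k - j) * (-1)^j * coeff W (k - j)
        = coeff p j * fact j * fact (k - j) * (-1)^j * ((-1)^(k-j) / fact (k - j) * (fact k / (-1)^k))"
      by (simp add: cW coeff_E0 lc_def)
    also have "\<dots> = coeff p j * fact j * fact k * (((-1)^j * (-1)^(k-j)) / (-1)^k)"
    proof -
      have gen: "a * b * F * s * (t / F * (c / u)) = a * b * c * (s * t / u)"
        if "(F::complex) \<noteq> 0" "u \<noteq> 0" for a b F s t c u
        using that by (simp add: field_simps)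
      show ?thesis by (rule gen) auto
    qed
    also have "\<dots> = fact k * (fact j * coeff p j)"
      by (simp add: sgn)
    finally show "coeff p j * fact j * fact (k - j) * (-1)^j * coeff W (k - j) = fact k * (fact j * coeff p j)" .
  qed
  ultimately show False using S0 by simp
qed

lemma H1_degree: "degree (H1 \<gamma> h) = degree h"
proof (cases "degree h = 0")
  case True
  then have "pderiv h = 0" by (simp add: pderiv_eq_0_iff)
  then show ?thesis by (simp add: H1_def)
next
  case False
  have "degree (- smult \<gamma> (pderiv h)) < degree h"
    using False by (simp add: degree_pderiv)
  then show ?thesis unfolding H1_def diff_conv_add_uminus by (rule degree_add_eq_left)
qed

lemma H1_zero: "H1 \<gamma> h = 0 \<Longrightarrow> h = 0"
proof (rule ccontr)
  assume "H1 \<gamma> h = 0" "h \<noteq> 0"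
  show False
  proof (cases "degree h = 0")
    case True
    then have "pderiv h = 0" by (simp add: pderiv_eq_0_iff)
    then have "H1 \<gamma> h = h" by (simp add: H1_def)
    with \<open>H1 \<gamma> h = 0\<close> \<open>h \<noteq> 0\<close> show False by simp
  next
    case False
    then have "degree (H1 \<gamma> h) \<noteq> 0" by (simp add: H1_degree)
    with \<open>H1 \<gamma> h = 0\<close> show False by simp
  qed
qed

lemma H1_diff: "H1 \<gamma> (a - b) = H1 \<gamma> a - H1 \<gamma> b"
  by (simp add: H1_def pderiv_diff smult_diff_right)

lemma H1_inj: "inj_on (H1 \<gamma>) A"
proof (rule inj_onI)
  fix a b assume "H1 \<gamma> a = H1 \<gamma> b"
  then have "H1 \<gamma> (a - b) = 0" by (simp add: H1_diff)
  then show "a = b" using H1_zero by fastforce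
qed

lemma smult_sum_right: "smult a (sum f S) = (\<Sum>i\<in>S. smult a (f i))"
  by (induct S rule: infinite_finite_induct) (auto simp: smult_add_right)

lemma degree_higher_pderiv: "degree ((pderiv ^^ j) (f :: complex poly)) = degree f - j"
  by (induction j) (simp_all add: degree_pderiv)

lemma H1_surj:
  assumes "degree f \<le> n"
  shows "\<exists>g. degree g \<le> n \<and> H1 \<gamma> g = f"
proof -
  define F where "F j = smult (\<gamma>^j) ((pderiv ^^ j) f)" for j
  define g where "g = (\<Sum>j\<le>n. F j)"
  have "degree ((pderiv ^^ n) f) = 0" using assms by (simp add: degree_higher_pderiv)
  then have Fn: "F (Suc n) = 0" by (simp add: F_def pderiv_eq_0_iff)
  have "pderiv g = (\<Sum>j\<le>n. smult (\<gamma>^j) ((pderiv ^^ Suc j) f))"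
    using higher_pderiv_sum[of 1 F "{..n}"] by (simp add: g_def F_def pderiv_smult)
  then have "smult \<gamma> (pderiv g) = (\<Sum>j\<le>n. F (Suc j))"
    by (simp add: F_def smult_sum_right)
  then have "H1 \<gamma> g = (\<Sum>j\<le>n. F j - F (Suc j))"
    by (simp add: H1_def g_def sum_subtractf)
  also have "\<dots> = F 0 - F (Suc n)" by (rule sum_telescope)
  also have "\<dots> = f" unfolding Fn by (simp add: F_def)
  finally have "H1 \<gamma> g = f" .
  moreover have "degree g \<le> n"
    unfolding g_def
  proof (rule degree_sum_le)
    fix j
    have "degree (F j) \<le> degree ((pderiv ^^ j) f)" by (simp add: F_def degree_smult_le)
    also have "\<dots> \<le> n" using assms by (simp add: degree_higher_pderiv)
    finally show "degree (F j) \<le> n" .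
  qed simp
  ultimately show ?thesis by blast
qed

lemma H1inv_props:
  assumes "degree f \<le> n"
  shows "degree (H1inv n \<gamma> f) \<le> n" "H1 \<gamma> (H1inv n \<gamma> f) = f"
proof -
  obtain g where g: "degree g \<le> n" "H1 \<gamma> g = f" using H1_surj[OF assms] by blast
  have "H1inv n \<gamma> f = g"
    unfolding H1inv_def by (rule the_inv_into_f_eq[OF H1_inj g(2)]) (simp add: Pn_def g(1))
  then show "degree (H1inv n \<gamma> f) \<le> n" "H1 \<gamma> (H1inv n \<gamma> f) = f" using g by simp_all
qed

lemma near_root:
  fixes g :: "complex poly"
  assumes "degree g = k" "1 \<le> k" "poly g y = 0"
  shows "\<exists>x. poly (H1 \<gamma> g) x = 0 \<and> cmod (x - y) \<le> real k * cmod \<gamma>"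
proof (cases "\<gamma> = 0")
  case True
  then show ?thesis using assms(3) by (intro exI[of _ y]) (simp add: H1_def)
next
  case False
  show ?thesis
  proof (rule ccontr)
    assume "\<not> ?thesis"
    then have far: "\<And>x. poly (H1 \<gamma> g) x = 0 \<Longrightarrow> real k * cmod \<gamma> < cmod (x - y)" by force
    define q where "q = [:y, \<gamma>:]"
    define G where "G = pcompose g q"
    define p where "p = pcompose (H1 \<gamma> g) q"
    have dq: "degree q = 1" using False by (simp add: q_def)
    have pq: "pderiv q = [:\<gamma>:]" by (simp add: q_def pderiv_pCons)
    have pG: "p = G - pderiv G"
      by (simp add: p_def G_def H1_def pcompose_diff pcompose_smult pderiv_pcompose pq)
    have dp: "degree p = k" by (simp add: p_def degree_pcompose dq H1_degree assms(1))
    have dG: "degree G = k" by (simp add: G_def degree_pcompose dq assms(1))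
    have rts: "real k < cmod t" if "poly p t = 0" for t
    proof -
      have "poly (H1 \<gamma> g) (y + t * \<gamma>) = 0" using that by (simp add: p_def poly_pcompose q_def)
      then have "real k * cmod \<gamma> < cmod (t * \<gamma>)" using far by fastforce
      then show ?thesis using False by (simp add: norm_mult)
    qed
    have "(\<Sum>j\<le>k. fact j * coeff p j) \<noteq> 0" by (rule core[OF dp assms(2) rts])
    moreover have "(\<Sum>j\<le>k. fact j * coeff p j) = (\<Sum>j\<le>k. fact j * coeff G j - fact (Suc j) * coeff G (Suc j))"
      by (rule sum.cong) (simp_all add: pG coeff_pderiv algebra_simps)
    moreover have "\<dots> = coeff G 0 - fact (Suc k) * coeff G (Suc k)"
      using sum_telescope[of "\<lambda>j. fact j * coeff G j" k] by simp
    moreover have "coeff G (Suc k) = 0" using dG by (intro coeff_eq_0) simp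
    moreover have "coeff G 0 = 0" using assms(3) by (simp flip: poly_0_coeff_0 add: G_def poly_pcompose q_def)
    ultimately show False by simp
  qed
qed

lemma Z_zero: "Z 0 = UNIV" by (simp add: Z_def)

lemma Z_not_UNIV: "p \<noteq> 0 \<Longrightarrow> Z p \<noteq> UNIV"
proof
  assume "p \<noteq> 0" "Z p = UNIV"
  then have "finite (UNIV :: complex set)" using poly_roots_finite[of p] by (simp add: Z_def)
  then show False by (simp add: infinite_UNIV_char_0)
qed

lemma has_root:
  fixes p :: "complex poly"
  assumes "degree p \<ge> 1"
  shows "\<exists>z. poly p z = 0"
proof -
  obtain r where r: "smult (lead_coeff p) (\<Prod>i<degree p. [:-r i, 1:]) = p"
    using complex_poly_decompose' by blast
  have "poly (\<Prod>i<degree p. [:-r i, 1:]) (r 0) = 0"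
    unfolding poly_prod using assms by (intro prod_zero) auto
  then have "poly p (r 0) = 0" by (subst r[symmetric]) simp
  then show ?thesis by blast
qed

lemma dh_upper:
  assumes "f \<in> Pn n"
  shows "dh (Z f) (Z (H1inv n \<gamma> f)) \<le> ereal (real n * cmod \<gamma>)"
proof -
  define g where "g = H1inv n \<gamma> f"
  have dgn: "degree f \<le> n" using assms by (simp add: Pn_def)
  have Hg: "H1 \<gamma> g = f" using H1inv_props[OF dgn] by (simp add: g_def)
  have dg: "degree g = degree f" using Hg H1_degree by metis
  have nn: "0 \<le> ereal (real n * cmod \<gamma>)" by simp
  show ?thesis
  proof (cases "f = 0")
    case True
    then have "g = 0" using Hg H1_zero by blast
    then have "Z f = UNIV" "Z g = UNIV" using True by (simp_all add: Z_zero)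
    then have "dh (Z f) (Z g) = 0" by (simp add: dh_def)
    then show ?thesis using nn by (simp add: g_def)
  next
    case f0: False
    then have g0: "g \<noteq> 0" using Hg by (auto simp: H1_def)
    show ?thesis
    proof (cases "degree f = 0")
      case True
      have "Z f = {}"
        using True f0 by (auto simp: Z_def elim!: degree_eq_zeroE)
      moreover have "Z g = {}"
        using True dg g0 by (auto simp: Z_def elim!: degree_eq_zeroE)
      ultimately show ?thesis using nn by (simp add: g_def[symmetric] dh_def)
    next
      case False
      define k where "k = degree f"
      have k1: "1 \<le> k" using False by (simp add: k_def)
      have "Z f \<noteq> {}" using has_root[of f] k1 by (auto simp: Z_def k_def)
      moreover have "Z g \<noteq> {}" using has_root[of g] k1 dg by (auto simp: Z_def k_def)
      moreover have "Z f \<noteq> UNIV" "Z g \<noteq> UNIV" using f0 g0 Z_not_UNIV by auto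
      ultimately have dh: "dh (Z f) (Z g) = (SUP y\<in>Z g. INF x\<in>Z f. ereal (cmod (x - y)))"
        by (simp add: dh_def)
      have "(SUP y\<in>Z g. INF x\<in>Z f. ereal (cmod (x - y))) \<le> ereal (real n * cmod \<gamma>)"
      proof (rule SUP_least)
        fix y assume "y \<in> Z g"
        then have "poly g y = 0" by (simp add: Z_def)
        then obtain x where x: "poly (H1 \<gamma> g) x = 0" "cmod (x - y) \<le> real k * cmod \<gamma>"
          using near_root[of g k y \<gamma>] dg k1 by (auto simp: k_def)
        have "x \<in> Z f" using x(1) Hg by (simp add: Z_def)
        moreover have "real k * cmod \<gamma> \<le> real n * cmod \<gamma>"
          using dgn by (intro mult_right_mono) (auto simp: k_def)
        ultimately show "(INF x\<in>Z f. ereal (cmod (x - y))) \<le> ereal (real n * cmod \<gamma>)"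
          using x(2) by (intro INF_lower2[of x]) auto
      qed
      then show ?thesis using dh by (simp add: g_def[symmetric])
    qed
  qed
qed

lemma lower:
  assumes "n \<ge> 1"
  shows "ereal (fact n powr (1 / real n) * cmod \<gamma>) \<le> dh (Z (monom 1 n)) (Z (H1inv n \<gamma> (monom 1 n)))"
proof -
  define f :: "complex poly" where "f = monom 1 n"
  define g where "g = H1inv n \<gamma> f"
  have dgn: "degree f \<le> n" by (simp add: f_def degree_monom_le)
  have Hg: "H1 \<gamma> g = f" using H1inv_props[OF dgn] by (simp add: g_def)
  have dg_le: "degree g \<le> n" using H1inv_props[OF dgn] by (simp add: g_def)
  have rec: "coeff g i - \<gamma> * of_nat (Suc i) * coeff g (Suc i) = (if n = i then 1 else 0)" for i
  proof -
    have "coeff (H1 \<gamma> g) i = coeff f i" by (simp add: Hg)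
    then show ?thesis by (simp add: H1_def coeff_pderiv f_def coeff_monom mult.assoc)
  qed
  have cg: "coeff g (n - m) = \<gamma>^m * fact n / fact (n - m)" if "m \<le> n" for m
    using that
  proof (induction m)
    case 0
    have "coeff g (Suc n) = 0" using dg_le by (intro coeff_eq_0) auto
    then show ?case using rec[of n] by simp
  next
    case (Suc m)
    define i where "i = n - Suc m"
    have i: "Suc i = n - m" "i \<noteq> n" using Suc.prems by (auto simp: i_def)
    have "coeff g i = \<gamma> * of_nat (Suc i) * coeff g (Suc i)" using rec[of i] i(2) by simp
    also have "\<dots> = \<gamma> * of_nat (Suc i) * (\<gamma>^m * fact n / fact (Suc i))"
      using Suc by (simp add: i(1))
    also have "\<dots> = \<gamma>^Suc m * fact n / fact i"
      by (simp add: field_simps del: of_nat_Suc)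
    finally show ?case by (simp add: i_def)
  qed
  have cn: "coeff g n = 1" using cg[of 0] by simp
  have c0: "coeff g 0 = \<gamma>^n * fact n" using cg[of n] by simp
  have dg: "degree g = n" using dg_le cn by (intro antisym le_degree) auto
  obtain r where r: "smult (lead_coeff g) (\<Prod>i<degree g. [:-r i, 1:]) = g"
    using complex_poly_decompose' by blast
  have gP: "g = (\<Prod>i<n. [:-r i, 1:])" using r by (simp add: dg cn)
  have rootr: "poly g (r i) = 0" if "i < n" for i
    unfolding gP poly_prod using that by (intro prod_zero) auto
  define \<rho> where "\<rho> = fact n powr (1 / real n) * cmod \<gamma>"
  have \<rho>n: "\<rho>^n = fact n * cmod \<gamma>^n"
  proof -
    have "(fact n powr (1 / real n) :: real)^n = fact n powr (real n * (1 / real n))"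
      by (rule powr_power) simp
    also have "\<dots> = fact n" using assms by simp
    finally show ?thesis by (simp add: \<rho>_def power_mult_distrib)
  qed
  have "\<exists>i<n. \<rho> \<le> cmod (r i)"
  proof (rule ccontr)
    assume "\<not> ?thesis"
    then have lt: "\<And>i. i < n \<Longrightarrow> cmod (r i) < \<rho>" by force
    have "(\<Prod>i<n. cmod (r i)) < (\<Prod>i<n. \<rho>)"
      by (rule prod_mono_strict[of 0]) (use assms lt in \<open>auto intro: less_imp_le le_less_trans[OF norm_ge_zero]\<close>)
    also have "\<dots> = fact n * cmod \<gamma>^n" using \<rho>n by simp
    also have "\<dots> = cmod (poly g 0)" by (simp add: poly_0_coeff_0 c0 norm_mult norm_power)
    also have "\<dots> = (\<Prod>i<n. cmod (r i))" unfolding gP by (simp add: poly_prod flip: prod_norm)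
    finally show False by simp
  qed
  then obtain i where i: "i < n" "\<rho> \<le> cmod (r i)" by blast
  have Zf: "Z f = {0}" using assms by (auto simp: Z_def f_def poly_monom)
  have g0: "g \<noteq> 0" using cn by auto
  have "r i \<in> Z g" using rootr[OF i(1)] by (simp add: Z_def)
  then have "Z g \<noteq> {}" "Z g \<noteq> UNIV" using Z_not_UNIV[OF g0] by auto
  moreover have "{0::complex} \<noteq> UNIV" by (metis UNIV_I singletonD zero_neq_one)
  ultimately have dh: "dh (Z f) (Z g) = (SUP y\<in>Z g. ereal (cmod y))"
    by (simp add: dh_def Zf)
  have "ereal \<rho> \<le> ereal (cmod (r i))" using i(2) by simp
  also have "\<dots> \<le> (SUP y\<in>Z g. ereal (cmod y))" using \<open>r i \<in> Z g\<close> by (rule SUP_upper)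
  finally show ?thesis using dh by (simp add: \<rho>_def f_def g_def)
qed

theorem mainTheorem17:
  fixes n :: nat and \<gamma> :: complex
  assumes "n \<ge> 1"
  shows "ereal (fact n powr (1 / real n) * cmod \<gamma>) \<le> Kh n (H1inv n \<gamma>)
       \<and> Kh n (H1inv n \<gamma>) \<le> ereal (real n * cmod \<gamma>)"
proof
  have "monom 1 n \<in> Pn n" by (simp add: Pn_def degree_monom_le)
  then have "dh (Z (monom 1 n)) (Z (H1inv n \<gamma> (monom 1 n))) \<le> Kh n (H1inv n \<gamma>)"
    unfolding Kh_def by (rule SUP_upper)
  then show "ereal (fact n powr (1 / real n) * cmod \<gamma>) \<le> Kh n (H1inv n \<gamma>)"
    using lower[OF assms, of \<gamma>] by (rule order_trans[rotated])
  show "Kh n (H1inv n \<gamma>) \<le> ereal (real n * cmod \<gamma>)"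
    unfolding Kh_def by (rule SUP_least) (rule dh_upper)
qed

end
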